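(* Let $(A,\triangleright,\triangleleft,\alpha)$ be a Hom-$L$-dendriform algebra. Define $x\cdot y=x\triangleright y+x\triangleleft y$ and $x\ast y=x\triangleright y-y\triangleleft x$ for $x,y\in A$. Then $(A,\cdot,\alpha)$ and $(A,\ast,\alpha)$ are both Hom-preLie algebras.
   Context: A Hom-$L$-dendriform algebra is a vector space $A$ with bilinear maps $\triangleleft,\triangleright:A\otimes A\to A$ and a linear map $\alpha:A\to A$ such that for all $x,y,z\in A$: $\alpha(x)\triangleright(y\triangleright z)=(x\triangleright y)\triangleright\alpha(z)+(x\triangleleft y)\triangleright\alpha(z)+\alpha(y)\triangleright(x\triangleright z)-(y\triangleleft x)\triangleright\alpha(z)-(y\triangleright x)\triangleright\alpha(z)$ and $\alpha(x)\triangleright(y\triangleleft z)=(x\triangleright y)\triangleleft\alpha(z)+\alpha(y)\triangleleft(x\triangleright z)+\alpha(y)\triangleleft(x\triangleleft z)-(y\triangleleft x)\triangleleft\alpha(z)$. A Hom-preLie algebra is a vector space $S$ with a bilinear product $\cdot$ and linear $\alpha$ such that $(x\cdot y)\cdot\alpha(z)-\alpha(x)\cdot(y\cdot z)=(y\cdot x)\cdot\alpha(z)-\alpha(y)\cdot(x\cdot z)$ for all $x,y,z$. *)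

theory Defs
  imports Main "HOL.Vector_Spaces"
begin

text \<open>Linear maps and bilinear products are
  taken with respect to scale (Vector_Spaces.linear includes the vector space axioms).\<close>

definition bilinear_map :: "('k::field \<Rightarrow> 'a::ab_group_add \<Rightarrow> 'a) \<Rightarrow> ('a \<Rightarrow> 'a \<Rightarrow> 'a) \<Rightarrow> bool" where
  "bilinear_map scale m \<longleftrightarrow>
     (\<forall>y. Vector_Spaces.linear scale scale (\<lambda>x. m x y)) \<and>
     (\<forall>x. Vector_Spaces.linear scale scale (\<lambda>y. m x y))"

definition hom_L_dendriform ::
  "('k::field \<Rightarrow> 'a::ab_group_add \<Rightarrow> 'a) \<Rightarrow> ('a \<Rightarrow> 'a \<Rightarrow> 'a) \<Rightarrow> ('a \<Rightarrow> 'a \<Rightarrow> 'a) \<Rightarrow> ('a \<Rightarrow> 'a) \<Rightarrow> bool" where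
  "hom_L_dendriform scale R L \<alpha> \<longleftrightarrow>
     vector_space scale \<and> bilinear_map scale R \<and> bilinear_map scale L \<and>
     Vector_Spaces.linear scale scale \<alpha> \<and>
     (\<forall>x y z. R (\<alpha> x) (R y z) =
        R (R x y) (\<alpha> z) + R (L x y) (\<alpha> z) + R (\<alpha> y) (R x z)
        - R (L y x) (\<alpha> z) - R (R y x) (\<alpha> z)) \<and>
     (\<forall>x y z. R (\<alpha> x) (L y z) =
        L (R x y) (\<alpha> z) + L (\<alpha> y) (R x z) + L (\<alpha> y) (L x z) - L (L y x) (\<alpha> z))"

definition hom_preLie ::
  "('k::field \<Rightarrow> 'a::ab_group_add \<Rightarrow> 'a) \<Rightarrow> ('a \<Rightarrow> 'a \<Rightarrow> 'a) \<Rightarrow> ('a \<Rightarrow> 'a) \<Rightarrow> bool" where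
  "hom_preLie scale m \<alpha> \<longleftrightarrow>
     vector_space scale \<and> bilinear_map scale m \<and> Vector_Spaces.linear scale scale \<alpha> \<and>
     (\<forall>x y z. m (m x y) (\<alpha> z) - m (\<alpha> x) (m y z) = m (m y x) (\<alpha> z) - m (\<alpha> y) (m x z))"

end

theory Submission
  imports Defs
begin

lemma lin_add: "Vector_Spaces.linear s s f \<Longrightarrow> f (a + b) = f a + f b"
  by (simp add: module_hom_eq_linear[symmetric] module_hom.add)
lemma lin_diff: "Vector_Spaces.linear s s f \<Longrightarrow> f (a - b) = f a - f b"
  by (simp add: module_hom_eq_linear[symmetric] module_hom.diff)
lemma lin_addf: "Vector_Spaces.linear s s f \<Longrightarrow> Vector_Spaces.linear s s g \<Longrightarrow> Vector_Spaces.linear s s (\<lambda>x. f x + g x)"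
  proof -
  assume a: "Vector_Spaces.linear s s f" "Vector_Spaces.linear s s g"
  then have m: "module_pair s s" by (simp add: module_hom_eq_linear[symmetric] module_hom_def module_pair_def)
  show ?thesis using a module_pair.module_hom_add[OF m] by (simp add: module_hom_eq_linear[symmetric])
qed
lemma lin_difff: "Vector_Spaces.linear s s f \<Longrightarrow> Vector_Spaces.linear s s g \<Longrightarrow> Vector_Spaces.linear s s (\<lambda>x. f x - g x)"
  proof -
  assume a: "Vector_Spaces.linear s s f" "Vector_Spaces.linear s s g"
  then have m: "module_pair s s" by (simp add: module_hom_eq_linear[symmetric] module_hom_def module_pair_def)
  show ?thesis using a module_pair.module_hom_sub[OF m] by (simp add: module_hom_eq_linear[symmetric])
qed

theorem mainTheorem11:
  fixes scale :: "'k::field \<Rightarrow> 'a::ab_group_add \<Rightarrow> 'a"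
    and R L :: "'a \<Rightarrow> 'a \<Rightarrow> 'a" and \<alpha> :: "'a \<Rightarrow> 'a"
  assumes "hom_L_dendriform scale R L \<alpha>"
  shows "hom_preLie scale (\<lambda>x y. R x y + L x y) \<alpha> \<and>
         hom_preLie scale (\<lambda>x y. R x y - L y x) \<alpha>"
proof -
  have vs: "vector_space scale" and bR: "bilinear_map scale R" and bL: "bilinear_map scale L"
    and la: "Vector_Spaces.linear scale scale \<alpha>"
    and A1: "\<And>x y z. R (\<alpha> x) (R y z) =
        R (R x y) (\<alpha> z) + R (L x y) (\<alpha> z) + R (\<alpha> y) (R x z)
        - R (L y x) (\<alpha> z) - R (R y x) (\<alpha> z)"
    and A2: "\<And>x y z. R (\<alpha> x) (L y z) =
        L (R x y) (\<alpha> z) + L (\<alpha> y) (R x z) + L (\<alpha> y) (L x z) - L (L y x) (\<alpha> z)"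
    using assms unfolding hom_L_dendriform_def by blast+
  have lR1: "Vector_Spaces.linear scale scale (\<lambda>x. R x c)" 
    and lR2: "Vector_Spaces.linear scale scale (\<lambda>x. R c x)"
    and lL1: "Vector_Spaces.linear scale scale (\<lambda>x. L x c)" 
    and lL2: "Vector_Spaces.linear scale scale (\<lambda>x. L c x)" for c
    using bR bL unfolding bilinear_map_def by blast+
  have R1: "\<And>a b c. R (a + b) c = R a c + R b c" "\<And>a b c. R a (b + c) = R a b + R a c"
    "\<And>a b c. R (a - b) c = R a c - R b c" "\<And>a b c. R a (b - c) = R a b - R a c"
    by (rule lin_add[OF lR1] lin_add[OF lR2] lin_diff[OF lR1] lin_diff[OF lR2])+
  have L1: "\<And>a b c. L (a + b) c = L a c + L b c" "\<And>a b c. L a (b + c) = L a b + L a c"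
    "\<And>a b c. L (a - b) c = L a c - L b c" "\<And>a b c. L a (b - c) = L a b - L a c"
    by (rule lin_add[OF lL1] lin_add[OF lL2] lin_diff[OF lL1] lin_diff[OF lL2])+
  have bil1: "bilinear_map scale (\<lambda>x y. R x y + L x y)"
    using bR bL unfolding bilinear_map_def by (auto intro: lin_addf)
  have bil2: "bilinear_map scale (\<lambda>x y. R x y - L y x)"
    using bR bL unfolding bilinear_map_def by (auto intro: lin_difff)
  have I1: "(R (R x y + L x y) (\<alpha> z) + L (R x y + L x y) (\<alpha> z)) -
      (R (\<alpha> x) (R y z + L y z) + L (\<alpha> x) (R y z + L y z)) =
      (R (R y x + L y x) (\<alpha> z) + L (R y x + L y x) (\<alpha> z)) -
      (R (\<alpha> y) (R x z + L x z) + L (\<alpha> y) (R x z + L x z))" for x y z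
  proof -
    have "((R (R x y + L x y) (\<alpha> z) + L (R x y + L x y) (\<alpha> z)) -
      (R (\<alpha> x) (R y z + L y z) + L (\<alpha> x) (R y z + L y z))) -
      ((R (R y x + L y x) (\<alpha> z) + L (R y x + L y x) (\<alpha> z)) -
      (R (\<alpha> y) (R x z + L x z) + L (\<alpha> y) (R x z + L x z)))
      = - (R (\<alpha> x) (R y z) - (R (R x y) (\<alpha> z) + R (L x y) (\<alpha> z) + R (\<alpha> y) (R x z)
        - R (L y x) (\<alpha> z) - R (R y x) (\<alpha> z)))
        - (R (\<alpha> x) (L y z) - (L (R x y) (\<alpha> z) + L (\<alpha> y) (R x z) + L (\<alpha> y) (L x z) - L (L y x) (\<alpha> z)))
        + (R (\<alpha> y) (L x z) - (L (R y x) (\<alpha> z) + L (\<alpha> x) (R y z) + L (\<alpha> x) (L y z) - L (L x y) (\<alpha> z)))"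
      unfolding R1 L1 by (simp add: algebra_simps)
    also have "\<dots> = 0" using A1[of x y z] A2[of x y z] A2[of y x z] by simp
    finally show ?thesis by simp
  qed
  have I2: "(R (R x y - L y x) (\<alpha> z) - L (\<alpha> z) (R x y - L y x)) -
      (R (\<alpha> x) (R y z - L z y) - L (R y z - L z y) (\<alpha> x)) =
      (R (R y x - L x y) (\<alpha> z) - L (\<alpha> z) (R y x - L x y)) -
      (R (\<alpha> y) (R x z - L z x) - L (R x z - L z x) (\<alpha> y))" for x y z
  proof -
    have "((R (R x y - L y x) (\<alpha> z) - L (\<alpha> z) (R x y - L y x)) -
      (R (\<alpha> x) (R y z - L z y) - L (R y z - L z y) (\<alpha> x))) -
      ((R (R y x - L x y) (\<alpha> z) - L (\<alpha> z) (R y x - L x y)) -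
      (R (\<alpha> y) (R x z - L z x) - L (R x z - L z x) (\<alpha> y)))
      = - (R (\<alpha> x) (R y z) - (R (R x y) (\<alpha> z) + R (L x y) (\<alpha> z) + R (\<alpha> y) (R x z)
        - R (L y x) (\<alpha> z) - R (R y x) (\<alpha> z)))
        + (R (\<alpha> x) (L z y) - (L (R x z) (\<alpha> y) + L (\<alpha> z) (R x y) + L (\<alpha> z) (L x y) - L (L z x) (\<alpha> y)))
        - (R (\<alpha> y) (L z x) - (L (R y z) (\<alpha> x) + L (\<alpha> z) (R y x) + L (\<alpha> z) (L y x) - L (L z y) (\<alpha> x)))"
      unfolding R1 L1 by (simp add: algebra_simps)
    also have "\<dots> = 0" using A1[of x y z] A2[of x z y] A2[of y z x] by simp
    finally show ?thesis by simp
  qed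
  show ?thesis unfolding hom_preLie_def
    apply (intro conjI vs la bil1 bil2 allI)
     apply (rule I1)
    apply (rule I2)
    done
qed

end
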